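(* Let $A=[a_{ij}]\in\{0,1\}^{N\times N}$ be the adjacency matrix of a static contact graph on nodes $\{1,\dots,N\}$ (with $a_{ii}=0$), and let $\beta_0>0$, $\delta>0$, $\kappa>0$ and $0\le\beta_a<\beta_0$. Let $(p_i(t),q_i(t))_{i=1}^N$ solve the SAIS system \[ \dot p_i=\beta_0(1-p_i-q_i)\sum_{j=1}^N a_{ij}p_j+\beta_a q_i\sum_{j=1}^N a_{ij}p_j-\delta p_i,\qquad \dot q_i=\kappa(1-p_i-q_i)\sum_{j=1}^N a_{ij}p_j-\beta_a q_i\sum_{j=1}^N a_{ij}p_j, \] for $i\in\{1,\dots,N\}$, with initial data at time $t_0$ that are probabilities ($p_i(t_0),q_i(t_0)\ge 0$, $p_i(t_0)+q_i(t_0)\le 1$), and let $(p_i'(t))_{i=1}^N$ solve the SIS (N-intertwined) system \[ \dot p_i'=\beta_0(1-p_i')\sum_{j=1}^N a_{ij}p_j'-\delta p_i',\qquad i\in\{1,\dots,N\}, \] with the same initial conditions $p_i'(t_0)=p_i(t_0)$ for all $i$. Then $p_i(t)\le p_i'(t)$ for all $i\in\{1,\dots,N\}$ and all $t\in[t_0,\infty)$.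
   Context: $p_i$ and $q_i$ are the (mean-field) probabilities that individual $i$ is infected and alert, respectively; $1-p_i-q_i$ is the probability it is susceptible. $a_{ij}=1$ if individual $j$ is a neighbor of individual $i$ (i.e. $i$ can be directly infected by $j$), and $a_{ij}=0$ otherwise. $\beta_0$ is the infection rate of a susceptible individual, $\beta_a$ the infection rate of an alert individual, $\kappa$ the alerting rate, $\delta$ the curing rate. *)

theory Defs
  imports "HOL-Analysis.Analysis"
begin

text \<open>Nodes are indexed by 0..N-1 (the paper uses 1..N). The adjacency matrix is
  a function a :: nat => nat => real with entries in {0,1} on the index range.\<close>

definition adjacency_matrix :: "nat \<Rightarrow> (nat \<Rightarrow> nat \<Rightarrow> real) \<Rightarrow> bool" where
  "adjacency_matrix N a \<longleftrightarrow>
     (\<forall>i<N. \<forall>j<N. a i j = 0 \<or> a i j = 1) \<and> (\<forall>i<N. a i i = 0)"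

definition SAIS_solution ::
  "nat \<Rightarrow> (nat \<Rightarrow> nat \<Rightarrow> real) \<Rightarrow> real \<Rightarrow> real \<Rightarrow> real \<Rightarrow> real \<Rightarrow> real
     \<Rightarrow> (nat \<Rightarrow> real \<Rightarrow> real) \<Rightarrow> (nat \<Rightarrow> real \<Rightarrow> real) \<Rightarrow> bool" where
  "SAIS_solution N a \<beta>\<^sub>0 \<beta>\<^sub>a \<kappa> \<delta> t\<^sub>0 p q \<longleftrightarrow>
     (\<forall>i<N. \<forall>t\<ge>t\<^sub>0.
        ((p i) has_real_derivative
           (\<beta>\<^sub>0 * (1 - p i t - q i t) * (\<Sum>j<N. a i j * p j t)
            + \<beta>\<^sub>a * q i t * (\<Sum>j<N. a i j * p j t) - \<delta> * p i t)) (at t within {t\<^sub>0..}) \<and>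
        ((q i) has_real_derivative
           (\<kappa> * (1 - p i t - q i t) * (\<Sum>j<N. a i j * p j t)
            - \<beta>\<^sub>a * q i t * (\<Sum>j<N. a i j * p j t))) (at t within {t\<^sub>0..}))"

definition SIS_solution ::
  "nat \<Rightarrow> (nat \<Rightarrow> nat \<Rightarrow> real) \<Rightarrow> real \<Rightarrow> real \<Rightarrow> real
     \<Rightarrow> (nat \<Rightarrow> real \<Rightarrow> real) \<Rightarrow> bool" where
  "SIS_solution N a \<beta>\<^sub>0 \<delta> t\<^sub>0 p' \<longleftrightarrow>
     (\<forall>i<N. \<forall>t\<ge>t\<^sub>0.
        ((p' i) has_real_derivative
           (\<beta>\<^sub>0 * (1 - p' i t) * (\<Sum>j<N. a i j * p' j t) - \<delta> * p' i t)) (at t within {t\<^sub>0..}))"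

end

theory Submission
  imports Defs
begin


lemma cmp_lemma:
  fixes I :: "'i set" and u u' :: "'i \<Rightarrow> real \<Rightarrow> real"
  assumes fin: "finite I" and L: "L \<ge> 0"
    and deriv: "\<And>k t. k \<in> I \<Longrightarrow> t \<in> {t0..T} \<Longrightarrow> (u k has_real_derivative u' k t) (at t within {t0..T})"
    and init: "\<And>k. k \<in> I \<Longrightarrow> u k t0 \<le> 0"
    and step: "\<And>k t c. k \<in> I \<Longrightarrow> t0 < t \<Longrightarrow> t \<le> T \<Longrightarrow> c > 0 \<Longrightarrow> u k t = c
                 \<Longrightarrow> (\<forall>j\<in>I. u j t \<le> c) \<Longrightarrow> u' k t \<le> L * c"
  shows "\<forall>k\<in>I. \<forall>t\<in>{t0..T}. u k t \<le> 0"
proof -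
  have cont: "continuous_on {t0..T} (u k)" if "k \<in> I" for k
    by (rule DERIV_continuous_on) (use deriv that in auto)
  have claim: "\<forall>k\<in>I. \<forall>t\<in>{t0..T}. u k t < \<epsilon> * exp ((L+1)*(t-t0))" if eps: "\<epsilon> > 0" for \<epsilon>
  proof (rule ccontr)
    define g where "g t = \<epsilon> * exp ((L+1)*(t-t0))" for t
    have gcont: "continuous_on {t0..T} g" unfolding g_def by (intro continuous_intros)
    have gder: "(g has_real_derivative (L+1) * g t) (at t within {t0..T})" for t
      unfolding g_def by (auto intro!: derivative_eq_intros)
    have gpos: "g t > 0" for t unfolding g_def using eps by simp
    define Z where "Z = (\<Union>k\<in>I. {t \<in> {t0..T}. g t \<le> u k t})"
    assume "\<not> ?thesis"
    then obtain k0 s0 where k0: "k0 \<in> I" "s0 \<in> {t0..T}" "g s0 \<le> u k0 s0"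
      unfolding g_def by force
    have Zne: "Z \<noteq> {}" using k0 unfolding Z_def by blast
    have Zbdd: "bdd_below Z" unfolding Z_def by (rule bdd_belowI[of _ t0]) auto
    have Zcl: "closed Z" unfolding Z_def
      by (intro closed_UN fin ballI continuous_on_closed_Collect_le gcont cont) auto
    define t1 where "t1 = Inf Z"
    have t1Z: "t1 \<in> Z" unfolding t1_def by (rule closed_contains_Inf[OF Zne Zbdd Zcl])
    then obtain k where k: "k \<in> I" "t1 \<in> {t0..T}" "g t1 \<le> u k t1" unfolding Z_def by blast
    have t1low: "t1 \<le> t" if "t \<in> Z" for t unfolding t1_def using that Zbdd by (rule cInf_lower)
    have "t1 \<noteq> t0"
    proof
      assume "t1 = t0"
      with k init[OF k(1)] gpos[of t0] show False by simp
    qed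
    with k have t1gt: "t0 < t1" by auto
    have below: "u j t < g t" if "j \<in> I" "t \<in> {t0..<t1}" for j t
    proof (rule ccontr)
      assume "\<not> u j t < g t"
      then have "t \<in> Z" unfolding Z_def using that k(2) by (auto simp: not_less)
      then show False using t1low that by force
    qed
    have allle: "u j t1 \<le> g t1" if j: "j \<in> I" for j
    proof -
      have cl: "closed {t \<in> {t0..T}. u j t \<le> g t}"
        by (intro continuous_on_closed_Collect_le gcont cont j) auto
      have "{t0..<t1} \<subseteq> {t \<in> {t0..T}. u j t \<le> g t}"
        using below[OF j] k(2) by (auto simp: less_imp_le)
      then have "closure {t0..<t1} \<subseteq> {t \<in> {t0..T}. u j t \<le> g t}"
        using cl by (rule closure_minimal)
      then show ?thesis using t1gt by (auto simp: subset_iff)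
    qed
    have eq: "u k t1 = g t1" using allle[OF k(1)] k(3) by simp
    have st: "u' k t1 \<le> L * g t1"
      by (rule step[OF k(1) t1gt]) (use k eq gpos allle in auto)
    define h where "h t = u k t - g t" for t
    have hder: "(h has_real_derivative (u' k t1 - (L+1) * g t1)) (at t1 within {t0..T})"
      unfolding h_def by (intro derivative_intros deriv k gder)
    have neg: "u' k t1 - (L+1) * g t1 < 0" using st gpos[of t1] by (simp add: algebra_simps)
    obtain d where d: "d > 0" "\<forall>h'>0. t1 - h' \<in> {t0..T} \<longrightarrow> h' < d \<longrightarrow> h t1 < h (t1 - h')"
      using has_real_derivative_neg_dec_left[OF hder neg] by blast
    define h' where "h' = min (d/2) (t1 - t0)"
    have h'pos: "h' > 0" "h' < d" using d t1gt unfolding h'_def by auto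
    have mem: "t1 - h' \<in> {t0..<t1}" "t1 - h' \<in> {t0..T}" using h'pos k(2) unfolding h'_def by auto
    have "h t1 < h (t1 - h')" using d h'pos mem by blast
    moreover have "h t1 = 0" unfolding h_def using eq by simp
    moreover have "h (t1 - h') < 0" unfolding h_def using below[OF k(1) mem(1)] by simp
    ultimately show False by linarith
  qed
  show ?thesis
  proof (intro ballI, rule ccontr)
    fix k t assume kt: "k \<in> I" "t \<in> {t0..T}" and "\<not> u k t \<le> 0"
    then have pos: "u k t > 0" by simp
    define \<epsilon> where "\<epsilon> = u k t / exp ((L+1)*(t-t0))"
    have "\<epsilon> > 0" unfolding \<epsilon>_def using pos by simp
    from claim[OF this] kt have "u k t < \<epsilon> * exp ((L+1)*(t-t0))" by blast
    then show False unfolding \<epsilon>_def by simp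
  qed
qed



lemma sum_lower:
  fixes a x :: "nat \<Rightarrow> real"
  assumes "\<And>j. j<N \<Longrightarrow> 0 \<le> a j \<and> a j \<le> 1" "\<And>j. j<N \<Longrightarrow> -c \<le> x j" "0 \<le> c"
  shows "-(real N * c) \<le> (\<Sum>j<N. a j * x j)"
proof -
  have "(\<Sum>j<N. -c) \<le> (\<Sum>j<N. a j * x j)"
  proof (rule sum_mono)
    fix j assume "j \<in> {..<N}"
    then have h: "0 \<le> a j" "a j \<le> 1" "-c \<le> x j" using assms by auto
    show "-c \<le> a j * x j"
    proof (cases "x j \<ge> 0")
      case True then show ?thesis using h assms(3) by (meson mult_nonneg_nonneg neg_le_0_iff_le order_trans)
    next
      case False
      then have "1 * x j \<le> a j * x j" using h by (intro mult_right_mono_neg) auto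
      then show ?thesis using h by simp
    qed
  qed
  then show ?thesis by simp
qed

lemma sum_upper:
  fixes a x :: "nat \<Rightarrow> real"
  assumes "\<And>j. j<N \<Longrightarrow> 0 \<le> a j \<and> a j \<le> 1" "\<And>j. j<N \<Longrightarrow> x j \<le> c" "0 \<le> c"
  shows "(\<Sum>j<N. a j * x j) \<le> real N * c"
proof -
  have "-(real N * c) \<le> (\<Sum>j<N. a j * (- x j))"
    by (rule sum_lower) (use assms in auto)
  then show ?thesis by (simp add: sum_negf)
qed

lemma sum_abs:
  fixes a x :: "nat \<Rightarrow> real"
  assumes "\<And>j. j<N \<Longrightarrow> 0 \<le> a j \<and> a j \<le> 1" "\<And>j. j<N \<Longrightarrow> \<bar>x j\<bar> \<le> B" "0 \<le> B"
  shows "\<bar>\<Sum>j<N. a j * x j\<bar> \<le> real N * B"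
proof -
  have xb: "-B \<le> x j" "x j \<le> B" if "j<N" for j using assms(2)[OF that] by auto
  have "-(real N * B) \<le> (\<Sum>j<N. a j * x j)" by (rule sum_lower) (use assms xb in auto)
  moreover have "(\<Sum>j<N. a j * x j) \<le> real N * B" by (rule sum_upper) (use assms xb in auto)
  ultimately show ?thesis by (simp add: abs_le_iff)
qed

lemma prod_low:
  fixes x y c d K :: real
  assumes "-c \<le> x" "-d \<le> y" "\<bar>x\<bar> \<le> K" "\<bar>y\<bar> \<le> K" "0 \<le> c" "0 \<le> d"
  shows "-(K*(c+d)) \<le> x * y"
proof -
  have K: "0 \<le> K" using assms(3) by linarith
  have e: "K*(c+d) = K*c + K*d" by (simp add: algebra_simps)
  have Kc: "0 \<le> K*c" "0 \<le> K*d" using K assms by auto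
  show ?thesis
  proof (cases "x \<ge> 0")
    case True
    show ?thesis
    proof (cases "y \<ge> 0")
      case True then have "0 \<le> x*y" using \<open>x\<ge>0\<close> by simp
      then show ?thesis using e Kc by linarith
    next
      case False
      have "x * (-y) \<le> K * d" using True False assms by (intro mult_mono) auto
      then show ?thesis using e Kc by simp
    qed
  next
    case False
    show ?thesis
    proof (cases "y \<ge> 0")
      case True
      have "(-x) * y \<le> c * K" using True False assms by (intro mult_mono) auto
      then show ?thesis using e Kc by (simp add: mult.commute)
    next
      case False then have "0 \<le> x*y" using \<open>\<not> x\<ge>0\<close> by (simp add: mult_neg_neg less_imp_le)
      then show ?thesis using e Kc by linarith
    qed
  qed
qed


lemma sais_inv:
  fixes a :: "nat \<Rightarrow> nat \<Rightarrow> real" and p q :: "nat \<Rightarrow> real \<Rightarrow> real"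
  assumes a01: "\<And>i j. i<N \<Longrightarrow> j<N \<Longrightarrow> 0 \<le> a i j \<and> a i j \<le> 1"
    and par: "\<beta>0 > 0" "\<delta> > 0" "\<kappa> > 0" "0 \<le> \<beta>a"
    and B: "0 \<le> B" "\<And>j s. j<N \<Longrightarrow> s \<in> {t0..T} \<Longrightarrow> \<bar>p j s\<bar> \<le> B \<and> \<bar>q j s\<bar> \<le> B"
    and dp: "\<And>i s. i<N \<Longrightarrow> s \<in> {t0..T} \<Longrightarrow> ((p i) has_real_derivative
           (\<beta>0 * (1 - p i s - q i s) * (\<Sum>j<N. a i j * p j s)
            + \<beta>a * q i s * (\<Sum>j<N. a i j * p j s) - \<delta> * p i s)) (at s within {t0..T})"
    and dq: "\<And>i s. i<N \<Longrightarrow> s \<in> {t0..T} \<Longrightarrow> ((q i) has_real_derivative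
           (\<kappa> * (1 - p i s - q i s) * (\<Sum>j<N. a i j * p j s)
            - \<beta>a * q i s * (\<Sum>j<N. a i j * p j s))) (at s within {t0..T})"
    and init: "\<And>i. i<N \<Longrightarrow> p i t0 \<ge> 0 \<and> q i t0 \<ge> 0 \<and> p i t0 + q i t0 \<le> 1"
  shows "\<forall>j<N. \<forall>s\<in>{t0..T}. p j s \<ge> 0 \<and> q j s \<ge> 0 \<and> p j s + q j s \<le> 1"
proof -
  define S where "S i s = (\<Sum>j<N. a i j * p j s)" for i s
  define Dp where "Dp i s = \<beta>0 * (1 - p i s - q i s) * S i s + \<beta>a * q i s * S i s - \<delta> * p i s" for i s
  define Dq where "Dq i s = \<kappa> * (1 - p i s - q i s) * S i s - \<beta>a * q i s * S i s" for i s
  define I where "I = {..<N} \<times> {..<3::nat}"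
  define u where "u k s = (if snd k = (0::nat) then - p (fst k) s else if snd k = 1 then - q (fst k) s
                   else p (fst k) s + q (fst k) s - 1)" for k s
  define u' where "u' k s = (if snd k = (0::nat) then - Dp (fst k) s else if snd k = 1 then - Dq (fst k) s
                   else Dp (fst k) s + Dq (fst k) s)" for k s
  define K where "K = 1 + 2*B + real N * B"
  define L where "L = (\<beta>0 + \<beta>a + \<kappa> + \<delta>) * K * (real N + 1)"
  have K1: "1 \<le> K" unfolding K_def using B(1) by simp
  have L0: "0 \<le> L" unfolding L_def using K1 par by simp
  have res: "\<forall>k\<in>I. \<forall>s\<in>{t0..T}. u k s \<le> 0"
  proof (rule cmp_lemma[where L = L and u' = u'])
    show "finite I" unfolding I_def by simp
    show "0 \<le> L" by (rule L0)
  next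
    fix k s assume k: "k \<in> I" and s: "s \<in> {t0..T}"
    then have i: "fst k < N" unfolding I_def by auto
    note dp' = dp[OF i s, folded S_def, folded Dp_def]
    note dq' = dq[OF i s, folded S_def, folded Dq_def]
    show "(u k has_real_derivative u' k s) (at s within {t0..T})"
    proof (cases "snd k = 0")
      case True
      then show ?thesis unfolding u_def u'_def using dp' by (simp add: DERIV_minus)
    next
      case False
      then show ?thesis unfolding u_def u'_def using dp' dq'
        by (auto intro!: derivative_eq_intros)
    qed
  next
    fix k assume "k \<in> I"
    then show "u k t0 \<le> 0" unfolding u_def I_def using init by auto
  next
    fix k s c assume k: "k \<in> I" and s: "t0 < s" "s \<le> T" and c: "c > 0" and uk: "u k s = c"
      and all: "\<forall>j\<in>I. u j s \<le> c"
    obtain i m where km: "k = (i, m)" "i < N" "m < 3" using k unfolding I_def by auto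
    have sT: "s \<in> {t0..T}" using s by auto
    have lowp: "-c \<le> p j s" if "j<N" for j using all[rule_format, of "(j,0)"] that unfolding I_def u_def by auto
    have lowq: "-c \<le> q j s" if "j<N" for j using all[rule_format, of "(j,1)"] that unfolding I_def u_def by auto
    have lows: "-c \<le> 1 - p j s - q j s" if "j<N" for j using all[rule_format, of "(j,2)"] that unfolding I_def u_def by auto
    have bp: "\<bar>p j s\<bar> \<le> B" "\<bar>q j s\<bar> \<le> B" if "j<N" for j using B(2)[OF that sT] by auto
    have Slow: "-(real N * c) \<le> S i s" unfolding S_def
      by (rule sum_lower) (use a01 km lowp c in auto)
    have Sabs: "\<bar>S i s\<bar> \<le> real N * B" unfolding S_def
      by (rule sum_abs) (use a01 km bp B in auto)
    have SK: "\<bar>S i s\<bar> \<le> K" using Sabs B(1) unfolding K_def by linarith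
    have sK: "\<bar>1 - p i s - q i s\<bar> \<le> K" using bp[OF km(2)] B(1) unfolding K_def
      by (smt (verit) mult_nonneg_nonneg of_nat_0_le_iff)
    have qK: "\<bar>q i s\<bar> \<le> K" using bp[OF km(2)] B(1) unfolding K_def
      by (smt (verit) mult_nonneg_nonneg of_nat_0_le_iff)
    define M where "M = K * (real N + 1) * c"
    have KM: "K * (c + real N * c) = M" unfolding M_def by (simp add: algebra_simps)
    have LM: "L * c = \<beta>0 * M + \<beta>a * M + \<kappa> * M + \<delta> * M" unfolding L_def M_def by (simp add: algebra_simps)
    have M0: "0 \<le> M" unfolding M_def using K1 c by simp
    have cM: "c \<le> M"
    proof -
      have "1 * c \<le> (K * (real N + 1)) * c" using K1 c
        by (intro mult_right_mono) (auto simp: algebra_simps intro: order_trans[OF K1])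
      then show ?thesis unfolding M_def by simp
    qed
    have cKM: "c * K \<le> M"
    proof -
      have "(c*K) * 1 \<le> (c*K) * (real N + 1)" using K1 c by (intro mult_left_mono) auto
      then show ?thesis unfolding M_def by (simp add: algebra_simps)
    qed
    have Nc: "0 \<le> real N * c" using c by simp
    have sS: "-M \<le> (1 - p i s - q i s) * S i s"
      using prod_low[OF lows[OF km(2)] Slow sK SK _ Nc] c KM by simp
    have qS: "-M \<le> q i s * S i s"
      using prod_low[OF lowq[OF km(2)] Slow qK SK _ Nc] c KM by simp
    have b0sS: "-(\<beta>0 * M) \<le> \<beta>0 * (1 - p i s - q i s) * S i s"
      using mult_left_mono[OF sS, of \<beta>0] par by (simp add: mult.assoc)
    have kasS: "-(\<kappa> * M) \<le> \<kappa> * (1 - p i s - q i s) * S i s"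
      using mult_left_mono[OF sS, of \<kappa>] par by (simp add: mult.assoc)
    have baqS: "-(\<beta>a * M) \<le> \<beta>a * q i s * S i s"
      using mult_left_mono[OF qS, of \<beta>a] par by (simp add: mult.assoc)
    have nn: "0 \<le> \<beta>0 * M" "0 \<le> \<beta>a * M" "0 \<le> \<kappa> * M" "0 \<le> \<delta> * M" using M0 par by auto
    have dc: "0 \<le> \<delta> * c" using c par by simp
    have dM: "\<delta> * c \<le> \<delta> * M" using cM par by simp
    have cS: "c * (- S i s) \<le> c * K" using SK c by (intro mult_left_mono) auto
    have ba_cS: "\<beta>a * (c * (- S i s)) \<le> \<beta>a * M" using cS cKM par
      by (intro mult_left_mono) auto
    have bk_cS: "(\<beta>0 + \<kappa>) * (c * (- S i s)) \<le> (\<beta>0 + \<kappa>) * M" using cS cKM par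
      by (intro mult_left_mono) auto
    consider "m = 0" | "m = 1" | "m = 2" using km by linarith
    then show "u' k s \<le> L * c"
    proof cases
      case 1
      then have pe: "p i s = -c" using uk km unfolding u_def by simp
      have "u' k s = - Dp i s" using 1 km unfolding u'_def by simp
      also have "\<dots> = -(\<beta>0 * (1 - p i s - q i s) * S i s) - \<beta>a * q i s * S i s - \<delta> * c"
        unfolding Dp_def pe by simp
      finally show ?thesis using LM b0sS baqS nn dc by linarith
    next
      case 2
      then have qe: "q i s = -c" using uk km unfolding u_def by simp
      have "u' k s = - Dq i s" using 2 km unfolding u'_def by simp
      also have "\<dots> = -(\<kappa> * (1 - p i s - q i s) * S i s) + \<beta>a * (c * (- S i s))"
        unfolding Dq_def qe by (simp add: algebra_simps)
      finally show ?thesis using LM kasS ba_cS nn by linarith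
    next
      case 3
      then have se: "1 - p i s - q i s = -c" using uk km unfolding u_def by simp
      have "u' k s = Dp i s + Dq i s" using 3 km unfolding u'_def by simp
      also have "\<dots> = (\<beta>0 + \<kappa>) * ((1 - p i s - q i s) * S i s) - \<delta> * p i s"
        unfolding Dp_def Dq_def by (simp add: algebra_simps)
      also have "\<dots> = (\<beta>0 + \<kappa>) * (c * (- S i s)) - \<delta> * p i s"
        unfolding se by simp
      finally have "u' k s \<le> (\<beta>0 + \<kappa>) * M + \<delta> * c"
        using bk_cS lowp[OF km(2)] par mult_left_mono[OF lowp[OF km(2)], of \<delta>] by simp
      then show ?thesis using LM nn dM by (simp add: algebra_simps)
    qed
  qed
  show ?thesis
  proof (intro allI impI ballI)
    fix j s assume "j < N" "s \<in> {t0..T}"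
    then have "(j,0) \<in> I" "(j,1) \<in> I" "(j,2) \<in> I" unfolding I_def by auto
    with res \<open>s \<in> _\<close> have "u (j,0) s \<le> 0" "u (j,1) s \<le> 0" "u (j,2) s \<le> 0" by blast+
    then show "p j s \<ge> 0 \<and> q j s \<ge> 0 \<and> p j s + q j s \<le> 1" unfolding u_def by auto
  qed
qed


theorem theorem1:
  fixes N :: nat and a :: "nat \<Rightarrow> nat \<Rightarrow> real"
    and \<beta>\<^sub>0 \<beta>\<^sub>a \<kappa> \<delta> t\<^sub>0 :: real
    and p q p' :: "nat \<Rightarrow> real \<Rightarrow> real"
  assumes "adjacency_matrix N a"
    and "\<beta>\<^sub>0 > 0" and "\<delta> > 0" and "\<kappa> > 0" and "0 \<le> \<beta>\<^sub>a" and "\<beta>\<^sub>a < \<beta>\<^sub>0"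
    and "SAIS_solution N a \<beta>\<^sub>0 \<beta>\<^sub>a \<kappa> \<delta> t\<^sub>0 p q"
    and "\<forall>i<N. p i t\<^sub>0 \<ge> 0 \<and> q i t\<^sub>0 \<ge> 0 \<and> p i t\<^sub>0 + q i t\<^sub>0 \<le> 1"
    and "SIS_solution N a \<beta>\<^sub>0 \<delta> t\<^sub>0 p'"
    and "\<forall>i<N. p' i t\<^sub>0 = p i t\<^sub>0"
  shows "\<forall>i<N. \<forall>t\<ge>t\<^sub>0. p i t \<le> p' i t"
proof (intro allI impI)
  fix i0 T assume i0: "i0 < N" and T: "t\<^sub>0 \<le> T"
  have a01: "0 \<le> a i j \<and> a i j \<le> 1" if "i<N" "j<N" for i j
    using assms(1) that unfolding adjacency_matrix_def by force
  have sub: "{t\<^sub>0..T} \<subseteq> {t\<^sub>0..}" by auto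
  note sais = assms(7)[unfolded SAIS_solution_def]
  note sis = assms(9)[unfolded SIS_solution_def]
  have dp: "((p i) has_real_derivative
           (\<beta>\<^sub>0 * (1 - p i s - q i s) * (\<Sum>j<N. a i j * p j s)
            + \<beta>\<^sub>a * q i s * (\<Sum>j<N. a i j * p j s) - \<delta> * p i s)) (at s within {t\<^sub>0..T})"
    if "i<N" "s \<in> {t\<^sub>0..T}" for i s
    using sais that by (intro has_field_derivative_subset[OF _ sub]) auto
  have dq: "((q i) has_real_derivative
           (\<kappa> * (1 - p i s - q i s) * (\<Sum>j<N. a i j * p j s)
            - \<beta>\<^sub>a * q i s * (\<Sum>j<N. a i j * p j s))) (at s within {t\<^sub>0..T})"
    if "i<N" "s \<in> {t\<^sub>0..T}" for i s
    using sais that by (intro has_field_derivative_subset[OF _ sub]) auto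
  have dp': "((p' i) has_real_derivative
           (\<beta>\<^sub>0 * (1 - p' i s) * (\<Sum>j<N. a i j * p' j s) - \<delta> * p' i s)) (at s within {t\<^sub>0..T})"
    if "i<N" "s \<in> {t\<^sub>0..T}" for i s
    using sis that by (intro has_field_derivative_subset[OF _ sub]) auto
  have cp: "continuous_on {t\<^sub>0..T} (p j)" "continuous_on {t\<^sub>0..T} (q j)" "continuous_on {t\<^sub>0..T} (p' j)"
    if "j<N" for j
    by (rule DERIV_continuous_on, use dp dq dp' that in blast)+
  have "bounded (\<Union>j\<in>{..<N}. p j ` {t\<^sub>0..T} \<union> q j ` {t\<^sub>0..T} \<union> p' j ` {t\<^sub>0..T})"
  proof (intro bounded_UN ballI)
    fix j assume "j \<in> {..<N}"
    then have j: "j < N" by simp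
    show "bounded (p j ` {t\<^sub>0..T} \<union> q j ` {t\<^sub>0..T} \<union> p' j ` {t\<^sub>0..T})"
      by (intro compact_imp_bounded compact_Un compact_continuous_image cp[OF j] compact_Icc)
  qed simp
  then obtain B0 where B0: "\<forall>x\<in>(\<Union>j\<in>{..<N}. p j ` {t\<^sub>0..T} \<union> q j ` {t\<^sub>0..T} \<union> p' j ` {t\<^sub>0..T}). norm x \<le> B0"
    unfolding bounded_iff by blast
  define B where "B = max B0 0"
  have B: "0 \<le> B" unfolding B_def by simp
  have bnd: "\<bar>p j s\<bar> \<le> B \<and> \<bar>q j s\<bar> \<le> B \<and> \<bar>p' j s\<bar> \<le> B" if "j<N" "s \<in> {t\<^sub>0..T}" for j s
    using B0 that unfolding B_def by force
  have inv: "\<forall>j<N. \<forall>s\<in>{t\<^sub>0..T}. p j s \<ge> 0 \<and> q j s \<ge> 0 \<and> p j s + q j s \<le> 1"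
    by (rule sais_inv[where B = B, OF a01 assms(2,3,4,5) B _ dp dq]) (use bnd assms(8) in auto)
  define S where "S i s = (\<Sum>j<N. a i j * p j s)" for i s
  define S' where "S' i s = (\<Sum>j<N. a i j * p' j s)" for i s
  define u' where "u' i s = (\<beta>\<^sub>0 * (1 - p i s - q i s) * S i s
            + \<beta>\<^sub>a * q i s * S i s - \<delta> * p i s) - (\<beta>\<^sub>0 * (1 - p' i s) * S' i s - \<delta> * p' i s)" for i s
  define L where "L = \<beta>\<^sub>0 * real N * (1 + B)"
  have "\<forall>k\<in>{..<N}. \<forall>s\<in>{t\<^sub>0..T}. p k s - p' k s \<le> 0"
  proof (rule cmp_lemma[where L = L and u' = u'])
    show "0 \<le> L" unfolding L_def using B assms(2) by simp
  next
    fix k s assume "k \<in> {..<N}" "s \<in> {t\<^sub>0..T}"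
    then show "((\<lambda>s. p k s - p' k s) has_real_derivative u' k s) (at s within {t\<^sub>0..T})"
      unfolding u'_def S_def S'_def using dp dp' by (intro DERIV_diff) auto
  next
    fix k assume "k \<in> {..<N}" then show "p k t\<^sub>0 - p' k t\<^sub>0 \<le> 0" using assms(10) by simp
  next
    fix i s c assume i: "i \<in> {..<N}" and s: "t\<^sub>0 < s" "s \<le> T" and c: "c > 0"
      and ui: "p i s - p' i s = c" and all: "\<forall>j\<in>{..<N}. p j s - p' j s \<le> c"
    have sT: "s \<in> {t\<^sub>0..T}" using s by auto
    have iN: "i < N" using i by simp
    have pi: "0 \<le> p i s" "p i s \<le> 1" "0 \<le> q i s" using inv iN sT by force+
    have S0: "0 \<le> S i s" unfolding S_def using inv sT a01[OF iN]
      by (intro sum_nonneg mult_nonneg_nonneg) auto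
    have dS: "S i s - S' i s \<le> real N * c"
    proof -
      have "S i s - S' i s = (\<Sum>j<N. a i j * (p j s - p' j s))"
        unfolding S_def S'_def by (simp add: sum_subtractf right_diff_distrib)
      also have "\<dots> \<le> real N * c" by (rule sum_upper) (use a01[OF iN] all c in auto)
      finally show ?thesis .
    qed
    have S'b: "\<bar>S' i s\<bar> \<le> real N * B" unfolding S'_def
      by (rule sum_abs) (use a01[OF iN] bnd sT B in auto)
    have e: "u' i s = \<beta>\<^sub>0 * ((1 - p i s) * (S i s - S' i s) + c * (- S' i s))
                     - (\<beta>\<^sub>0 - \<beta>\<^sub>a) * (q i s * S i s) - \<delta> * c"
    proof -
      have pe: "p i s = c + p' i s" using ui by simp
      show ?thesis unfolding u'_def pe by (simp add: algebra_simps)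
    qed
    have t1: "(1 - p i s) * (S i s - S' i s) \<le> (1 - p i s) * (real N * c)"
      using dS pi by (intro mult_left_mono) auto
    have t2: "(1 - p i s) * (real N * c) \<le> 1 * (real N * c)"
      using pi c by (intro mult_right_mono) auto
    have t3: "c * (- S' i s) \<le> c * (real N * B)" using S'b c by (intro mult_left_mono) auto
    have t4: "0 \<le> (\<beta>\<^sub>0 - \<beta>\<^sub>a) * (q i s * S i s)" using assms(6) pi S0 by simp
    have t5: "(1 - p i s) * (S i s - S' i s) + c * (- S' i s) \<le> real N * (1 + B) * c"
      using t1 t2 t3 by (simp add: algebra_simps)
    have t6: "\<beta>\<^sub>0 * ((1 - p i s) * (S i s - S' i s) + c * (- S' i s)) \<le> \<beta>\<^sub>0 * (real N * (1 + B) * c)"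
      using t5 assms(2) by (intro mult_left_mono) auto
    have t7: "0 \<le> \<delta> * c" using assms(3) c by simp
    show "u' i s \<le> L * c" unfolding e L_def using t4 t6 t7 by (simp add: algebra_simps)
  qed (simp)
  then show "p i0 T \<le> p' i0 T" using i0 T by auto
qed

end
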